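(* Fix a class $n$ and let $\bar\rho\equiv\sum_{m\ne n}\frac{r_m}{C_m}$. If $\bar\rho<1$, then the system is a Guaranteed Rate server to class $n$ with rate $R_n=(1-\bar\rho)C_n$ and error term $E_n=\sum_{m\neq n}\frac{\sigma_m}{(1-\bar\rho)C_m}$; i.e., for every packet $p^{f_n,i}$ of class $n$, $d^{f_n,i}\le GRC^{f_n,i}(R_n)+E_n$.
   Context: A multiclass FIFO system serves packets from $N$ classes (flows $f_1,\dots,f_N$). Class $m$ has constant service rate $C_m>0$. All packets, indexed in order of arrival (ties broken arbitrarily) as $p^{g,1},p^{g,2},\dots$ with arrival times $0\le a^{g,1}\le\cdots$ and lengths $l^{g,j}>0$, depart at $d^{g,j}=\max\{a^{g,j},d^{g,j-1}\}+l^{g,j}/C_{c(j)}$, $d^{g,0}=0$, $c(j)$ the class of $p^{g,j}$. The $i$-th packet of class $n$ is $p^{f_n,i}$ with arrival time $a^{f_n,i}$, departure time $d^{f_n,i}$, length $l^{f_n,i}$. $A_m(s,t)$ is the total length of class-$m$ packets arriving in $[s,t]$; each class satisfies $A_m(s,t)\le r_m(t-s)+\sigma_m$ for all $0\le s\le t$, with $r_m,\sigma_m\ge0$. The guaranteed rate clock for class $n$ with rate $R$ is $GRC^{f_n,0}=0$, $GRC^{f_n,i}(R)=\max\{a^{f_n,i},GRC^{f_n,i-1}(R)\}+l^{f_n,i}/R$. *)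

theory Defs
  imports Complex_Main
begin

text \<open>Packets are indexed globally by arrival order j = 1,2,...,K.
  a j = arrival time, l j = length, c j = class (classes are 0..N-1),
  C m = service rate of class m.\<close>

fun dep :: "(nat \<Rightarrow> real) \<Rightarrow> (nat \<Rightarrow> real) \<Rightarrow> (nat \<Rightarrow> nat) \<Rightarrow> (nat \<Rightarrow> real) \<Rightarrow> nat \<Rightarrow> real" where
  "dep a l c C 0 = 0"
| "dep a l c C (Suc j) = max (a (Suc j)) (dep a l c C j) + l (Suc j) / C (c (Suc j))"

text \<open>Guaranteed rate clock of class n with rate R, evaluated along the global
  packet order: grc a l c n R j is the clock value GRC^{f_n,i}(R) of the last
  class-n packet among packets 1..j (i.e. of packet j itself when c j = n),
  and 0 if there is none.  This is exactly the recursion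
  GRC^{f_n,i} = max(a^{f_n,i}, GRC^{f_n,i-1}) + l^{f_n,i}/R over class-n packets.\<close>
fun grc :: "(nat \<Rightarrow> real) \<Rightarrow> (nat \<Rightarrow> real) \<Rightarrow> (nat \<Rightarrow> nat) \<Rightarrow> nat \<Rightarrow> real \<Rightarrow> nat \<Rightarrow> real" where
  "grc a l c n R 0 = 0"
| "grc a l c n R (Suc j) =
     (if c (Suc j) = n then max (a (Suc j)) (grc a l c n R j) + l (Suc j) / R
      else grc a l c n R j)"

definition arr :: "nat \<Rightarrow> (nat \<Rightarrow> real) \<Rightarrow> (nat \<Rightarrow> real) \<Rightarrow> (nat \<Rightarrow> nat) \<Rightarrow> nat \<Rightarrow> real \<Rightarrow> real \<Rightarrow> real" where
  "arr K a l c m s t = (\<Sum>j\<in>{j\<in>{1..K}. c j = m \<and> s \<le> a j \<and> a j \<le> t}. l j)"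

end

theory Submission
  imports Defs
begin

lemma busy:
  assumes "a 1 \<ge> 0"
  shows "\<exists>k\<in>{1..Suc j}. dep a l c C (Suc j) = a k + (\<Sum>i\<in>{k..Suc j}. l i / C (c i))"
proof (induction j)
  case 0
  then show ?case using assms by (intro bexI[of _ 1]) auto
next
  case (Suc j)
  then obtain k where k: "k \<in> {1..Suc j}" "dep a l c C (Suc j) = a k + (\<Sum>i\<in>{k..Suc j}. l i / C (c i))" by blast
  show ?case
  proof (cases "dep a l c C (Suc j) \<le> a (Suc (Suc j))")
    case True
    then show ?thesis by (intro bexI[of _ "Suc (Suc j)"]) auto
  next
    case False
    then have "dep a l c C (Suc (Suc j)) = a k + (\<Sum>i\<in>{k..Suc j}. l i / C (c i)) + l (Suc (Suc j)) / C (c (Suc (Suc j)))"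
      using k by simp
    also have "\<dots> = a k + (\<Sum>i\<in>{k..Suc (Suc j)}. l i / C (c i))"
      using k by (simp add: sum.cl_ivl_Suc)
    finally show ?thesis using k by (intro bexI[of _ k]) auto
  qed
qed

lemma grc_lb:
  assumes R: "R > 0" and s: "s \<ge> 1"
    and len: "\<And>j. j \<in> {1..K} \<Longrightarrow> l j > 0"
    and mono: "\<And>j k. j \<in> {1..K} \<Longrightarrow> k \<in> {1..K} \<Longrightarrow> j \<le> k \<Longrightarrow> a j \<le> a k"
  shows "j \<le> K \<Longrightarrow> (\<Sum>i\<in>{i\<in>{s..j}. c i = n}. l i) > 0 \<Longrightarrow>
     grc a l c n R j \<ge> a s + (\<Sum>i\<in>{i\<in>{s..j}. c i = n}. l i) / R"
proof (induction j)
  case 0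
  then show ?case using s by simp
next
  case (Suc j)
  have nn: "(\<Sum>i\<in>{i\<in>{s..j}. c i = n}. l i) \<ge> 0"
    using Suc.prems s len by (intro sum_nonneg) (auto intro: less_imp_le)
  show ?case
  proof (cases "Suc j < s")
    case True
    then have "{i\<in>{s..Suc j}. c i = n} = {}" by auto
    then have "(\<Sum>i\<in>{i\<in>{s..Suc j}. c i = n}. l i) = 0" by (simp only: sum.empty)
    then show ?thesis using Suc.prems by linarith
  next
    case False
    then have ins: "{i\<in>{s..Suc j}. c i = n} = (if c (Suc j) = n then insert (Suc j) {i\<in>{s..j}. c i = n} else {i\<in>{s..j}. c i = n})"
      by (auto simp: le_Suc_eq)
    show ?thesis
    proof (cases "c (Suc j) = n")
      case True
      let ?S = "(\<Sum>i\<in>{i\<in>{s..j}. c i = n}. l i)"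
      have eq: "(\<Sum>i\<in>{i\<in>{s..Suc j}. c i = n}. l i) = l (Suc j) + ?S"
        using ins True by simp
      have "a s + ?S / R \<le> max (a (Suc j)) (grc a l c n R j)"
      proof (cases "?S > 0")
        case True
        then show ?thesis using Suc by simp
      next
        case False
        then have "?S = 0" using nn by simp
        moreover have "a s \<le> a (Suc j)" using mono[of s "Suc j"] \<open>\<not> Suc j < s\<close> Suc.prems s by auto
        ultimately show ?thesis by simp
      qed
      then show ?thesis using True eq by (simp add: add_divide_distrib)
    next
      case False
      then show ?thesis using ins Suc by simp
    qed
  qed
qed

theorem theorem3:
  fixes N K n :: nat and a l :: "nat \<Rightarrow> real" and c :: "nat \<Rightarrow> nat"
    and C r \<sigma> :: "nat \<Rightarrow> real"
  assumes n_cls: "n < N"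
    and C_pos: "\<And>m. m < N \<Longrightarrow> C m > 0"
    and r_nn: "\<And>m. m < N \<Longrightarrow> r m \<ge> 0"
    and sigma_nn: "\<And>m. m < N \<Longrightarrow> \<sigma> m \<ge> 0"
    and cls: "\<And>j. j \<in> {1..K} \<Longrightarrow> c j < N"
    and len_pos: "\<And>j. j \<in> {1..K} \<Longrightarrow> l j > 0"
    and arr_nn: "\<And>j. j \<in> {1..K} \<Longrightarrow> a j \<ge> 0"
    and arr_mono: "\<And>j k. j \<in> {1..K} \<Longrightarrow> k \<in> {1..K} \<Longrightarrow> j \<le> k \<Longrightarrow> a j \<le> a k"
    and envelope: "\<And>m s t. m < N \<Longrightarrow> 0 \<le> s \<Longrightarrow> s \<le> t \<Longrightarrow>
                     arr K a l c m s t \<le> r m * (t - s) + \<sigma> m"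
    and load: "(\<Sum>m\<in>{..<N} - {n}. r m / C m) < 1"
  shows "\<forall>j\<in>{1..K}. c j = n \<longrightarrow>
           dep a l c C j \<le>
             grc a l c n ((1 - (\<Sum>m\<in>{..<N} - {n}. r m / C m)) * C n) j
             + (\<Sum>m\<in>{..<N} - {n}. \<sigma> m / ((1 - (\<Sum>m'\<in>{..<N} - {n}. r m' / C m')) * C m))"
proof (intro ballI impI)
  fix j assume j: "j \<in> {1..K}" and cj: "c j = n"
  define \<rho> where "\<rho> = (\<Sum>m\<in>{..<N} - {n}. r m / C m)"
  define R where "R = (1 - \<rho>) * C n"
  have rho_nn: "\<rho> \<ge> 0" unfolding \<rho>_def using r_nn C_pos by (intro sum_nonneg) (auto intro!: divide_nonneg_pos)
  have rho1: "1 - \<rho> > 0" using load \<rho>_def by simp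
  have Rpos: "R > 0" unfolding R_def using rho1 C_pos n_cls by simp
  obtain j' where j': "j = Suc j'" using j by (cases j) auto
  have "a 1 \<ge> 0" using arr_nn j by auto
  from busy[of a j' l c C, OF this] obtain k where
    k: "k \<in> {1..j}" "dep a l c C j = a k + (\<Sum>i\<in>{k..j}. l i / C (c i))" using j' by auto
  define T where "T = (\<Sum>i\<in>{k..j}. l i / C (c i))"
  define B where "B m = (\<Sum>i\<in>{i\<in>{k..j}. c i = m}. l i)" for m
  have kK: "k \<in> {1..K}" using k j by auto
  have ak: "a k \<ge> 0" using arr_nn kK by auto
  have akj: "a k \<le> a j" using arr_mono kK j k by auto
  have dep_ge: "dep a l c C j \<ge> a j"
  proof -
    have "l j / C (c j) \<ge> 0" using len_pos[OF j] C_pos[OF cls[OF j]] by simp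
    then show ?thesis using j' by simp
  qed
  have Tge: "a j - a k \<le> T" using dep_ge k T_def by simp
  have Tsum: "T = (\<Sum>m\<in>{..<N}. B m / C m)"
  proof -
    have "T = (\<Sum>i\<in>{k..j}. \<Sum>m\<in>{..<N}. if c i = m then l i / C m else 0)"
      unfolding T_def
    proof (rule sum.cong[OF refl])
      fix i assume "i \<in> {k..j}"
      then have "c i < N" using cls k j by auto
      then show "l i / C (c i) = (\<Sum>m\<in>{..<N}. if c i = m then l i / C m else 0)"
        by (simp add: sum.delta)
    qed
    also have "\<dots> = (\<Sum>m\<in>{..<N}. \<Sum>i\<in>{k..j}. if c i = m then l i / C m else 0)"
      by (rule sum.swap)
    also have "\<dots> = (\<Sum>m\<in>{..<N}. B m / C m)"
      unfolding B_def by (simp add: sum.inter_filter[symmetric] sum_divide_distrib)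
    finally show ?thesis .
  qed
  have Bm: "B m \<le> r m * T + \<sigma> m" if m: "m < N" for m
  proof -
    have "B m \<le> arr K a l c m (a k) (a j)"
      unfolding B_def arr_def
    proof (rule sum_mono2)
      show "finite {i \<in> {1..K}. c i = m \<and> a k \<le> a i \<and> a i \<le> a j}" by simp
      show "{i \<in> {k..j}. c i = m} \<subseteq> {i \<in> {1..K}. c i = m \<and> a k \<le> a i \<and> a i \<le> a j}"
      proof
        fix i assume i: "i \<in> {i \<in> {k..j}. c i = m}"
        then have iK: "i \<in> {1..K}" using k j by auto
        show "i \<in> {i \<in> {1..K}. c i = m \<and> a k \<le> a i \<and> a i \<le> a j}"
          using i iK arr_mono[OF kK iK] arr_mono[OF iK j] by auto
      qed
      show "\<And>b. b \<in> {i \<in> {1..K}. c i = m \<and> a k \<le> a i \<and> a i \<le> a j} - {i \<in> {k..j}. c i = m} \<Longrightarrow> 0 \<le> l b"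
        using len_pos by (auto intro: less_imp_le)
    qed
    also have "\<dots> \<le> r m * (a j - a k) + \<sigma> m" using envelope[OF m ak akj] .
    also have "\<dots> \<le> r m * T + \<sigma> m" using Tge r_nn[OF m] by (simp add: mult_left_mono)
    finally show ?thesis .
  qed
  have "T = B n / C n + (\<Sum>m\<in>{..<N} - {n}. B m / C m)"
    using Tsum n_cls by (simp add: sum.remove)
  also have "\<dots> \<le> B n / C n + (\<Sum>m\<in>{..<N} - {n}. (r m * T + \<sigma> m) / C m)"
    using Bm C_pos by (intro add_left_mono sum_mono divide_right_mono) (auto intro: less_imp_le)
  also have "\<dots> = B n / C n + \<rho> * T + (\<Sum>m\<in>{..<N} - {n}. \<sigma> m / C m)"
    unfolding \<rho>_def by (simp add: add_divide_distrib sum.distrib sum_distrib_right)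
  finally have "(1 - \<rho>) * T \<le> B n / C n + (\<Sum>m\<in>{..<N} - {n}. \<sigma> m / C m)"
    by (simp add: algebra_simps)
  then have "T \<le> (B n / C n + (\<Sum>m\<in>{..<N} - {n}. \<sigma> m / C m)) / (1 - \<rho>)"
    using rho1 by (simp add: pos_le_divide_eq mult.commute)
  also have "\<dots> = B n / R + (\<Sum>m\<in>{..<N} - {n}. \<sigma> m / ((1 - \<rho>) * C m))"
    unfolding R_def by (simp add: add_divide_distrib sum_divide_distrib divide_divide_eq_left mult.commute)
  finally have Tle: "T \<le> B n / R + (\<Sum>m\<in>{..<N} - {n}. \<sigma> m / ((1 - \<rho>) * C m))" .
  have Bpos: "B n > 0"
  proof -
    have "B n \<ge> l j" unfolding B_def
      using k j cj len_pos by (intro member_le_sum) (auto intro: less_imp_le)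
    then show ?thesis using len_pos[OF j] by simp
  qed
  have G: "grc a l c n R j \<ge> a k + B n / R"
    using grc_lb[where s=k and j=j and c=c and n=n and a=a and l=l and K=K, OF Rpos _ len_pos arr_mono] k j Bpos unfolding B_def by auto
  show "dep a l c C j \<le> grc a l c n ((1 - (\<Sum>m\<in>{..<N} - {n}. r m / C m)) * C n) j
             + (\<Sum>m\<in>{..<N} - {n}. \<sigma> m / ((1 - (\<Sum>m'\<in>{..<N} - {n}. r m' / C m')) * C m))"
    using k(2) T_def Tle G unfolding R_def \<rho>_def by simp
qed

end
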